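(* There is a universal constant $C>0$ such that for every positive integer $T$, $x \in \{0,1\}^T$ and $p \in [0,1]^T$, there exist a set $S \subseteq [0,1]$ with $|S| \le C\sqrt{T}$ and distributions $\mathcal{D}_1,\ldots,\mathcal{D}_T$ supported on $S$ such that $\mathcal{D} = (\mathcal{D}_1,\ldots,\mathcal{D}_T) \in \underline{\mathcal{C}}(x)$ and $\|p - \mathcal{D}\|_1 \le \mathsf{LowerCalDist}(x,p) + C\sqrt{T}$.
   Context: Let $\underline{\mathcal{C}}(x)$ be the set of $T$-tuples $\mathcal{D} = (\mathcal{D}_1,\ldots,\mathcal{D}_T)$ of probability distributions, each with finite support contained in $[0,1]$, such that $\sum_{t=1}^T (x_t - \alpha)\mathcal{D}_t(\alpha) = 0$ for every $\alpha \in [0,1]$. For such $\mathcal{D}$, $\|p - \mathcal{D}\|_1 = \sum_{t=1}^T \mathbb{E}_{q_t \sim \mathcal{D}_t}|p_t - q_t|$, and $\mathsf{LowerCalDist}(x,p) = \inf_{\mathcal{D} \in \underline{\mathcal{C}}(x)} \|p - \mathcal{D}\|_1$. *)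

theory Defs
  imports "HOL-Probability.Probability"
begin

text \<open>A T-tuple of distributions is modelled as D :: nat => real pmf, indexed by t < T
  (index t corresponds to the paper's t+1). Each D t has finite support contained in [0,1].\<close>

definition lower_cal_set :: "nat \<Rightarrow> (nat \<Rightarrow> real) \<Rightarrow> (nat \<Rightarrow> real pmf) set" where
  "lower_cal_set T x = {D. (\<forall>t<T. finite (set_pmf (D t)) \<and> set_pmf (D t) \<subseteq> {0..1}) \<and>
      (\<forall>\<alpha>\<in>{0..1::real}. (\<Sum>t<T. (x t - \<alpha>) * pmf (D t) \<alpha>) = 0)}"

definition dist_l1 :: "nat \<Rightarrow> (nat \<Rightarrow> real) \<Rightarrow> (nat \<Rightarrow> real pmf) \<Rightarrow> real" where
  "dist_l1 T p D = (\<Sum>t<T. measure_pmf.expectation (D t) (\<lambda>q. \<bar>p t - q\<bar>))"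

definition LowerCalDist :: "nat \<Rightarrow> (nat \<Rightarrow> real) \<Rightarrow> (nat \<Rightarrow> real) \<Rightarrow> real" where
  "LowerCalDist T x p = (INF D \<in> lower_cal_set T x. dist_l1 T p D)"

end

theory Submission
  imports Defs
begin
lemma expA: fixes f :: "'a \<Rightarrow> real"
  assumes "finite A" "set_pmf M \<subseteq> A"
  shows "measure_pmf.expectation M f = (\<Sum>a\<in>A. pmf M a * f a)"
  using integral_measure_pmf[OF assms(1), of M f] assms(2) by auto

lemma pmf_mapA: 
  assumes "finite A" "set_pmf M \<subseteq> A"
  shows "pmf (map_pmf r M) y = (\<Sum>a\<in>A. pmf M a * (if r a = y then 1 else 0))"
proof -
  have "pmf (map_pmf r M) y = measure_pmf.expectation M (indicator (r -` {y}))"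
    by (simp add: pmf_map integral_indicator)
  also have "\<dots> = measure_pmf.expectation M (\<lambda>a. indicator {y} (r a))"
    by (rule arg_cong[where f="measure_pmf.expectation M"]) (auto simp: indicator_def fun_eq_iff)
  also have "\<dots> = (\<Sum>a\<in>A. pmf M a * (if r a = y then 1 else 0))"
    by (subst expA[OF assms]) (auto simp: indicator_def intro!: sum.cong)
  finally show ?thesis .
qed

lemma bucket:
  fixes m :: nat and q :: real
  assumes "m > 0" "q \<in> {0..1}"
  defines "k \<equiv> min (m-1) (nat \<lfloor>q * real m\<rfloor>)"
  shows "k < m \<and> real k / real m \<le> q \<and> q \<le> (real k + 1) / real m"
proof -
  have mp: "real m > 0" using assms by simp
  have f0: "0 \<le> \<lfloor>q * real m\<rfloor>" using assms by auto
  have fl: "real_of_int \<lfloor>q * real m\<rfloor> \<le> q * real m" "q * real m < real_of_int \<lfloor>q * real m\<rfloor> + 1"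
    by linarith+
  show ?thesis
  proof (cases "nat \<lfloor>q * real m\<rfloor> \<le> m - 1")
    case True
    hence kk: "real k = real_of_int \<lfloor>q * real m\<rfloor>" using f0 unfolding k_def by simp
    have "k < m" using True assms(1) unfolding k_def by simp
    moreover have "real k / real m \<le> q" using fl mp kk by (simp add: divide_le_eq)
    moreover have "q \<le> (real k + 1) / real m" using fl mp kk by (simp add: le_divide_eq)
    ultimately show ?thesis by simp
  next
    case False
    hence kk: "k = m - 1" unfolding k_def by simp
    have "int m \<le> \<lfloor>q * real m\<rfloor>" using False assms(1) by linarith
    hence "real m \<le> q * real m" using fl by linarith
    hence "1 \<le> q" using mp by simp
    hence "q = 1" using assms(2) by simp
    then show ?thesis using kk assms(1) mp by (auto simp: divide_le_eq le_divide_eq of_nat_diff)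
  qed
qed


lemma round_lemma:
  fixes D :: "nat \<Rightarrow> real pmf" and m :: nat
  assumes D: "D \<in> lower_cal_set T x" and m: "m > 0"
  shows "\<exists>S D'. S \<subseteq> {0..1} \<and> finite S \<and> card S \<le> m \<and> (\<forall>t<T. set_pmf (D' t) \<subseteq> S)
     \<and> D' \<in> lower_cal_set T x \<and> dist_l1 T p D' \<le> dist_l1 T p D + real T / real m"
proof -
  define A where "A = (\<Union>t<T. set_pmf (D t))"
  have finA: "finite A" using D unfolding A_def lower_cal_set_def by auto
  have A01: "A \<subseteq> {0..1}" using D unfolding A_def lower_cal_set_def by auto
  have sA: "\<And>t. t < T \<Longrightarrow> set_pmf (D t) \<subseteq> A" unfolding A_def by auto
  have cal: "\<And>q. q \<in> A \<Longrightarrow> (\<Sum>t<T. (x t - q) * pmf (D t) q) = 0"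
    using D A01 unfolding lower_cal_set_def by auto
  define b where "b q = min (m-1) (nat \<lfloor>q * real m\<rfloor>)" for q :: real
  have bk: "\<And>q. q \<in> A \<Longrightarrow> b q < m \<and> real (b q) / real m \<le> q \<and> q \<le> (real (b q) + 1) / real m"
    using bucket[OF m] A01 unfolding b_def by blast
  define w where "w t q k = pmf (D t) q * (if b q = k then 1 else 0)" for t q k
  define W where "W k = (\<Sum>t<T. \<Sum>q\<in>A. w t q k)" for k
  define Z where "Z k = (\<Sum>t<T. \<Sum>q\<in>A. q * w t q k)" for k
  define Y where "Y k = (\<Sum>t<T. \<Sum>q\<in>A. x t * w t q k)" for k
  define \<beta> where "\<beta> k = Z k / W k" for k
  define r where "r q = \<beta> (b q)" for q
  define D' where "D' t = map_pmf r (D t)" for t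
  have w0: "w t q k \<ge> 0" for t q k unfolding w_def by simp
  have YZ: "Y k = Z k" for k
  proof -
    have "Y k - Z k = (\<Sum>t<T. \<Sum>q\<in>A. (x t - q) * w t q k)"
      unfolding Y_def Z_def by (simp add: sum_subtractf[symmetric] left_diff_distrib)
    also have "\<dots> = (\<Sum>q\<in>A. \<Sum>t<T. (x t - q) * w t q k)" by (rule sum.swap)
    also have "\<dots> = (\<Sum>q\<in>A. (if b q = k then (\<Sum>t<T. (x t - q) * pmf (D t) q) else 0))"
      unfolding w_def by (auto intro!: sum.cong)
    also have "\<dots> = 0" using cal by (auto intro!: sum.neutral)
    finally show ?thesis by simp
  qed
  have Z0: "0 \<le> Z k" for k unfolding Z_def using A01 w0
    by (intro sum_nonneg) (auto intro!: mult_nonneg_nonneg)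
  have ZW: "Z k \<le> W k" for k unfolding Z_def W_def using A01 w0
    by (intro sum_mono) (auto intro!: mult_left_le_one_le)
  have W0: "W k = 0 \<Longrightarrow> Z k = 0" for k using Z0 ZW by (metis order_antisym)
  have b01: "\<beta> k \<in> {0..1}" for k
  proof -
    have "0 \<le> Z k" "Z k \<le> W k" using Z0 ZW by auto
    then show ?thesis unfolding \<beta>_def by (cases "W k = 0") (auto simp: divide_le_eq_1)
  qed
  have blo: "real k / real m * W k \<le> Z k" if "k < m" for k
  proof -
    have "real k / real m * W k = (\<Sum>t<T. \<Sum>q\<in>A. real k / real m * w t q k)"
      unfolding W_def by (simp add: sum_distrib_left)
    also have "\<dots> \<le> Z k" unfolding Z_def
    proof (intro sum_mono)
      fix t q assume qA: "q \<in> A"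
      show "real k / real m * w t q k \<le> q * w t q k"
      proof (cases "b q = k")
        case True
        then have "real k / real m \<le> q" using bk[OF qA] by simp
        then show ?thesis by (rule mult_right_mono) (rule w0)
      qed (simp add: w_def)
    qed
    finally show ?thesis .
  qed
  have bhi: "Z k \<le> (real k + 1) / real m * W k" if "k < m" for k
  proof -
    have "(real k + 1) / real m * W k = (\<Sum>t<T. \<Sum>q\<in>A. (real k + 1) / real m * w t q k)"
      unfolding W_def by (simp add: sum_distrib_left)
    moreover have "Z k \<le> \<dots>" unfolding Z_def
    proof (intro sum_mono)
      fix t q assume qA: "q \<in> A"
      show "q * w t q k \<le> (real k + 1) / real m * w t q k"
      proof (cases "b q = k")
        case True
        then have "q \<le> (real k + 1) / real m" using bk[OF qA] by simp
        then show ?thesis by (rule mult_right_mono) (rule w0)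
      qed (simp add: w_def)
    qed
    ultimately show ?thesis by simp
  qed
  have close: "\<bar>q - r q\<bar> \<le> 1 / real m" if t: "t < T" and q: "q \<in> set_pmf (D t)" for t q
  proof -
    have qA: "q \<in> A" using sA t q by auto
    have "0 < pmf (D t) q" using q by (simp add: pmf_positive)
    also have "pmf (D t) q = w t q (b q)" unfolding w_def by simp
    also have "\<dots> \<le> (\<Sum>q'\<in>A. w t q' (b q))" using finA qA w0 by (intro member_le_sum) auto
    also have "\<dots> \<le> W (b q)" unfolding W_def using t w0
      by (intro member_le_sum) (auto intro: sum_nonneg)
    finally have Wp: "W (b q) > 0" .
    have l: "real (b q) / real m \<le> \<beta> (b q)" using blo[of "b q"] bk[OF qA] Wp
      unfolding \<beta>_def by (simp add: le_divide_eq)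
    have h: "\<beta> (b q) \<le> (real (b q) + 1) / real m" using bhi[of "b q"] bk[OF qA] Wp
      unfolding \<beta>_def by (simp add: divide_le_eq)
    have "(real (b q) + 1) / real m = real (b q) / real m + 1 / real m" by (simp add: add_divide_distrib)
    then show ?thesis using l h bk[OF qA] unfolding r_def by linarith
  qed
  define S where "S = \<beta> ` {..<m}"
  have S01: "S \<subseteq> {0..1}" using b01 unfolding S_def by auto
  have cardS: "card S \<le> m" unfolding S_def using card_image_le[of "{..<m}" \<beta>] by simp
  have suppS: "\<forall>t<T. set_pmf (D' t) \<subseteq> S"
    using bk sA unfolding D'_def S_def r_def by fastforce
  have pmfD': "pmf (D' t) y = (\<Sum>q\<in>A. pmf (D t) q * (if r q = y then 1 else 0))" if "t < T" for t y
    unfolding D'_def by (rule pmf_mapA[OF finA sA[OF that]])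
  have calD': "(\<Sum>t<T. (x t - y) * pmf (D' t) y) = 0" for y
  proof -
    have "(\<Sum>t<T. (x t - y) * pmf (D' t) y) = (\<Sum>t<T. \<Sum>q\<in>A. (x t - y) * (pmf (D t) q * (if r q = y then 1 else 0)))"
      by (simp add: pmfD' sum_distrib_left)
    also have "\<dots> = (\<Sum>t<T. \<Sum>q\<in>A. \<Sum>k<m. (if \<beta> k = y then (x t - \<beta> k) * w t q k else 0))"
    proof (intro sum.cong refl)
      fix t q assume qA: "q \<in> A"
      have "(\<Sum>k<m. (if \<beta> k = y then (x t - \<beta> k) * w t q k else 0))
          = (\<Sum>k<m. (if b q = k then (if \<beta> k = y then (x t - \<beta> k) * pmf (D t) q else 0) else 0))"
        unfolding w_def by (intro sum.cong) auto
      also have "\<dots> = (if \<beta> (b q) = y then (x t - \<beta> (b q)) * pmf (D t) q else 0)"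
        using bk[OF qA] by (subst sum.delta') auto
      finally show "(x t - y) * (pmf (D t) q * (if r q = y then 1 else 0)) = (\<Sum>k<m. (if \<beta> k = y then (x t - \<beta> k) * w t q k else 0))"
        unfolding r_def by auto
    qed
    also have "\<dots> = (\<Sum>k<m. (if \<beta> k = y then (\<Sum>t<T. \<Sum>q\<in>A. (x t - \<beta> k) * w t q k) else 0))"
    proof -
      have "(\<Sum>t<T. \<Sum>q\<in>A. \<Sum>k<m. (if \<beta> k = y then (x t - \<beta> k) * w t q k else 0))
          = (\<Sum>t<T. \<Sum>k<m. \<Sum>q\<in>A. (if \<beta> k = y then (x t - \<beta> k) * w t q k else 0))"
        by (intro sum.cong refl) (rule sum.swap)
      also have "\<dots> = (\<Sum>k<m. \<Sum>t<T. \<Sum>q\<in>A. (if \<beta> k = y then (x t - \<beta> k) * w t q k else 0))"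
        by (rule sum.swap)
      also have "\<dots> = (\<Sum>k<m. (if \<beta> k = y then (\<Sum>t<T. \<Sum>q\<in>A. (x t - \<beta> k) * w t q k) else 0))"
        by (intro sum.cong refl) auto
      finally show ?thesis .
    qed
    also have "\<dots> = 0"
    proof (intro sum.neutral ballI)
      fix k
      have "(\<Sum>t<T. \<Sum>q\<in>A. (x t - \<beta> k) * w t q k) = Y k - \<beta> k * W k"
        unfolding Y_def W_def by (simp add: left_diff_distrib sum_subtractf sum_distrib_left)
      also have "\<dots> = 0" using YZ W0 unfolding \<beta>_def by (cases "W k = 0") auto
      finally have "(\<Sum>t<T. \<Sum>q\<in>A. (x t - \<beta> k) * w t q k) = 0" .
      then show "(if \<beta> k = y then (\<Sum>t<T. \<Sum>q\<in>A. (x t - \<beta> k) * w t q k) else 0) = 0" by (simp only: if_cancel if_True if_False split: if_split)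
    qed
    finally show ?thesis .
  qed
  have D'cal: "D' \<in> lower_cal_set T x"
  proof -
    have "finite S" unfolding S_def by simp
    then have "\<forall>t<T. finite (set_pmf (D' t))" using suppS finite_subset by blast
    then show ?thesis unfolding lower_cal_set_def using suppS S01 calD' by blast
  qed
  have dist: "dist_l1 T p D' \<le> dist_l1 T p D + real T / real m"
  proof -
    have "dist_l1 T p D' = (\<Sum>t<T. \<Sum>q\<in>A. pmf (D t) q * \<bar>p t - r q\<bar>)"
      unfolding dist_l1_def D'_def by (simp add: expA[OF finA sA])
    also have "\<dots> \<le> (\<Sum>t<T. \<Sum>q\<in>A. pmf (D t) q * \<bar>p t - q\<bar> + pmf (D t) q * (1 / real m))"
    proof (intro sum_mono)
      fix t q assume t: "t \<in> {..<T}" and "q \<in> A"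
      show "pmf (D t) q * \<bar>p t - r q\<bar> \<le> pmf (D t) q * \<bar>p t - q\<bar> + pmf (D t) q * (1 / real m)"
      proof (cases "q \<in> set_pmf (D t)")
        case True
        have "\<bar>p t - r q\<bar> \<le> \<bar>p t - q\<bar> + 1 / real m" using close[of t q] True t by auto
        then have "pmf (D t) q * \<bar>p t - r q\<bar> \<le> pmf (D t) q * (\<bar>p t - q\<bar> + 1 / real m)"
          by (rule mult_left_mono) simp
        then show ?thesis by (simp only: distrib_left)
      next
        case False then show ?thesis by (simp add: set_pmf_eq)
      qed
    qed
    also have "\<dots> = (\<Sum>t<T. \<Sum>q\<in>A. pmf (D t) q * \<bar>p t - q\<bar>) + (\<Sum>t<T. (\<Sum>q\<in>A. pmf (D t) q) * (1 / real m))"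
      by (simp add: sum.distrib sum_distrib_right sum_divide_distrib)
    also have "(\<Sum>t<T. (\<Sum>q\<in>A. pmf (D t) q) * (1 / real m)) = real T / real m"
    proof -
      have "\<And>t. t < T \<Longrightarrow> (\<Sum>q\<in>A. pmf (D t) q) = 1"
        using expA[OF finA sA, of _ "\<lambda>_. 1"] by simp
      then show ?thesis by simp
    qed
    also have "(\<Sum>t<T. \<Sum>q\<in>A. pmf (D t) q * \<bar>p t - q\<bar>) = dist_l1 T p D"
      unfolding dist_l1_def by (simp add: expA[OF finA sA])
    finally show ?thesis .
  qed
  show ?thesis using S01 cardS suppS D'cal dist unfolding S_def by blast
qed


theorem lemma3:
  "\<exists>C>0::real. \<forall>(T::nat) (x::nat \<Rightarrow> real) (p::nat \<Rightarrow> real).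
     T > 0 \<longrightarrow> (\<forall>t<T. x t \<in> {0, 1}) \<longrightarrow> (\<forall>t<T. p t \<in> {0..1}) \<longrightarrow>
     (\<exists>(S::real set) (D::nat \<Rightarrow> real pmf).
        S \<subseteq> {0..1} \<and> finite S \<and> real (card S) \<le> C * sqrt (real T) \<and>
        (\<forall>t<T. set_pmf (D t) \<subseteq> S) \<and>
        D \<in> lower_cal_set T x \<and>
        dist_l1 T p D \<le> LowerCalDist T x p + C * sqrt (real T))"
proof (intro exI[of _ 3] conjI allI impI)
  fix T :: nat and x p :: "nat \<Rightarrow> real"
  assume T: "T > 0" and x01: "\<forall>t<T. x t \<in> {0, 1}" and p01: "\<forall>t<T. p t \<in> {0..1}"
  define c where "c = (\<Sum>t<T. x t) / real T"
  have c0: "0 \<le> c" unfolding c_def using x01 by (auto intro!: sum_nonneg divide_nonneg_nonneg)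
  have "(\<Sum>t<T. x t) \<le> (\<Sum>t<T. 1)" using x01 by (intro sum_mono) auto
  then have c1: "c \<le> 1" unfolding c_def using T by simp
  have csum: "(\<Sum>t<T. (x t - c)) = 0" unfolding c_def using T by (simp add: sum_subtractf)
  define D0 where "D0 = (\<lambda>t::nat. return_pmf c)"
  have D0in: "D0 \<in> lower_cal_set T x"
    unfolding lower_cal_set_def D0_def using c0 c1 csum
    by (auto simp: pmf_return indicator_def)
  have nn: "dist_l1 T p D \<ge> 0" for D
    unfolding dist_l1_def by (intro sum_nonneg integral_nonneg) auto
  have bdd: "bdd_below ((\<lambda>D. dist_l1 T p D) ` lower_cal_set T x)"
    using nn by (intro bdd_belowI[of _ 0]) auto
  have sT: "sqrt (real T) \<ge> 1" using T by simp
  have "LowerCalDist T x p < LowerCalDist T x p + sqrt (real T)" using sT by simp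
  then obtain D where D: "D \<in> lower_cal_set T x" and Dl: "dist_l1 T p D < LowerCalDist T x p + sqrt (real T)"
    unfolding LowerCalDist_def using cINF_less_iff[OF _ bdd] D0in by blast
  define m where "m = nat \<lceil>sqrt (real T)\<rceil>"
  have m1: "real m \<ge> sqrt (real T)" unfolding m_def by linarith
  have m2: "real m \<le> sqrt (real T) + 1"
  proof -
    have "real m = real_of_int \<lceil>sqrt (real T)\<rceil>" unfolding m_def by simp
    then show ?thesis by linarith
  qed
  have "real m \<ge> 1" using m1 sT by linarith
  then have m0: "m > 0" by simp
  obtain S D' where S: "S \<subseteq> {0..1}" "finite S" "card S \<le> m" "\<forall>t<T. set_pmf (D' t) \<subseteq> S"
     "D' \<in> lower_cal_set T x" "dist_l1 T p D' \<le> dist_l1 T p D + real T / real m"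
    using round_lemma[OF D m0, of p] by blast
  have "real T / real m \<le> real T / sqrt (real T)"
    using m1 sT m0 by (intro divide_left_mono) (auto intro!: mult_pos_pos)
  also have "\<dots> = sqrt (real T)" by (simp add: real_div_sqrt)
  finally have Tm: "real T / real m \<le> sqrt (real T)" .
  show "\<exists>S D. S \<subseteq> {0..1} \<and> finite S \<and> real (card S) \<le> 3 * sqrt (real T) \<and>
        (\<forall>t<T. set_pmf (D t) \<subseteq> S) \<and> D \<in> lower_cal_set T x \<and>
        dist_l1 T p D \<le> LowerCalDist T x p + 3 * sqrt (real T)"
  proof (intro exI conjI)
    show "real (card S) \<le> 3 * sqrt (real T)" using S(3) m2 sT
      by (smt (verit) of_nat_le_iff)
    show "dist_l1 T p D' \<le> LowerCalDist T x p + 3 * sqrt (real T)"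
      using S(6) Dl Tm sT by linarith
  qed (use S in auto)
qed (simp)

end
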